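(* Let $H$ and $E$ be Hilbert spaces, let $T:H\to H$ be a bounded linear operator with $\ker T=\{0\}$, and let $\gamma:E\to H$ be a bounded linear operator with $\ker\gamma=\{0\}$ and $\mathcal{R}(T)\cap\mathcal{R}(\gamma)=\{0\}$. Define the linear operator $A$ on $\mathcal{D}(A)=\mathcal{R}(T)\dot+\mathcal{R}(\gamma)$ by $A(Tf+\gamma\varphi)=f$ for $f\in H$, $\varphi\in E$. If $\lambda\in\mathbb{C}$ is such that $I-\lambda T$ is boundedly invertible in $H$, then \[\ker(A-\lambda I)=\mathcal{R}\big((I-\lambda T)^{-1}\gamma\big).\]
   Context: $\mathcal{R}(\cdot)$ denotes the range of an operator and $\dot+$ a direct sum of linear subspaces. The operator $A$ is well defined because of the assumptions $\ker T=\{0\}$, $\ker\gamma=\{0\}$ and $\mathcal{R}(T)\cap\mathcal{R}(\gamma)=\{0\}$. *)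

theory Defs
  imports "HOL-Analysis.Analysis"
begin

class complex_vector = real_vector +
  fixes scaleC :: "complex \<Rightarrow> 'a \<Rightarrow> 'a" (infixr \<open>*\<^sub>C\<close> 75)
  assumes scaleC_add_right: "scaleC a (x + y) = scaleC a x + scaleC a y"
    and scaleC_add_left: "scaleC (a + b) x = scaleC a x + scaleC b x"
    and scaleC_scaleC: "scaleC a (scaleC b x) = scaleC (a * b) x"
    and scaleC_one: "scaleC 1 x = x"
    and scaleC_of_real: "scaleC (of_real r) x = scaleR r x"

class complex_normed_vector = complex_vector + real_normed_vector +
  assumes norm_scaleC: "norm (scaleC a x) = cmod a * norm x"

class chilbert_space = complex_normed_vector + complete_space +
  fixes cinner :: "'a \<Rightarrow> 'a \<Rightarrow> complex"
  assumes cinner_commute: "cinner x y = cnj (cinner y x)"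
    and cinner_add_left: "cinner (x + y) z = cinner x z + cinner y z"
    and cinner_scaleC_left: "cinner (scaleC c x) y = cnj c * cinner x y"
    and cinner_ge_zero: "0 \<le> Re (cinner x x) \<and> Im (cinner x x) = 0"
    and cinner_eq_zero_iff: "cinner x x = 0 \<longleftrightarrow> x = 0"
    and norm_eq_sqrt_cinner: "norm x = sqrt (Re (cinner x x))"

definition bounded_clinear :: "('a::complex_normed_vector \<Rightarrow> 'b::complex_normed_vector) \<Rightarrow> bool" where
  "bounded_clinear F \<longleftrightarrow>
     (\<forall>x y. F (x + y) = F x + F y) \<and> (\<forall>c x. F (c *\<^sub>C x) = c *\<^sub>C F x) \<and>
     (\<exists>K. \<forall>x. norm (F x) \<le> norm x * K)"

definition boundedly_invertible :: "('a::complex_normed_vector \<Rightarrow> 'a) \<Rightarrow> bool" where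
  "boundedly_invertible F \<longleftrightarrow>
     (\<exists>G. bounded_clinear G \<and> (\<forall>x. G (F x) = x) \<and> (\<forall>x. F (G x) = x))"

definition opA_dom :: "('h::complex_vector \<Rightarrow> 'h) \<Rightarrow> ('e \<Rightarrow> 'h) \<Rightarrow> 'h set" where
  "opA_dom T \<gamma> = {T f + \<gamma> \<phi> | f \<phi>. True}"

definition opA :: "('h::complex_vector \<Rightarrow> 'h) \<Rightarrow> ('e \<Rightarrow> 'h) \<Rightarrow> 'h \<Rightarrow> 'h" where
  "opA T \<gamma> x = (THE f. \<exists>\<phi>. x = T f + \<gamma> \<phi>)"

definition opA_eigenspace :: "('h::complex_vector \<Rightarrow> 'h) \<Rightarrow> ('e \<Rightarrow> 'h) \<Rightarrow> complex \<Rightarrow> 'h set" where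
  "opA_eigenspace T \<gamma> lam = {x \<in> opA_dom T \<gamma>. opA T \<gamma> x - lam *\<^sub>C x = 0}"

end

theory Submission
  imports Defs
begin

theorem lemma1:
  fixes T :: "'h::chilbert_space \<Rightarrow> 'h" and \<gamma> :: "'e::chilbert_space \<Rightarrow> 'h" and lam :: complex
  assumes "bounded_clinear T" and "\<forall>f. T f = 0 \<longrightarrow> f = 0"
    and "bounded_clinear \<gamma>" and "\<forall>\<phi>. \<gamma> \<phi> = 0 \<longrightarrow> \<phi> = 0"
    and "range T \<inter> range \<gamma> = {0}"
    and "boundedly_invertible (\<lambda>x. x - lam *\<^sub>C T x)"
  shows "opA_eigenspace T \<gamma> lam = range (inv (\<lambda>x. x - lam *\<^sub>C T x) \<circ> \<gamma>)"
proof -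
  define S where "S = (\<lambda>x. x - lam *\<^sub>C T x)"
  obtain G where G1: "\<And>x. G (S x) = x" and G2: "\<And>x. S (G x) = x"
    using assms(6) unfolding boundedly_invertible_def S_def by blast
  have injS: "inj S" by (metis G1 injI)
  have invS: "\<And>y. inv S y = G y" by (metis G2 injS inv_f_eq)
  have Tadd: "\<And>a b. T (a + b) = T a + T b" and Tsc: "\<And>c a. T (c *\<^sub>C a) = c *\<^sub>C T a"
    using assms(1) unfolding bounded_clinear_def by auto
  have gadd: "\<And>a b. \<gamma> (a + b) = \<gamma> a + \<gamma> b"
    using assms(3) unfolding bounded_clinear_def by auto
  have Tdiff: "T (a - b) = T a - T b" for a b
    using Tadd[of "a - b" b] by (simp add: algebra_simps)
  have gdiff: "\<gamma> (a - b) = \<gamma> a - \<gamma> b" for a b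
    using gadd[of "a - b" b] by (simp add: algebra_simps)
  have uniq: "f = f'" if "T f + \<gamma> p = T f' + \<gamma> p'" for f f' p p'
  proof -
    have "T (f - f') = \<gamma> (p' - p)" using that by (simp add: Tdiff gdiff algebra_simps)
    hence "T (f - f') \<in> range T \<inter> range \<gamma>" by (metis IntI rangeI)
    hence "T (f - f') = 0" using assms(5) by blast
    thus ?thesis using assms(2) by auto
  qed
  have opA_eq: "opA T \<gamma> (T f + \<gamma> p) = f" for f p
    unfolding opA_def
    by (rule the_equality) (auto dest: uniq)
  show ?thesis
  proof (intro set_eqI iffI)
    fix x assume "x \<in> opA_eigenspace T \<gamma> lam"
    then obtain f p where x: "x = T f + \<gamma> p" and e: "opA T \<gamma> x - lam *\<^sub>C x = 0"
      unfolding opA_eigenspace_def opA_dom_def by blast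
    have "f = lam *\<^sub>C x" using e opA_eq x by simp
    hence "T f = lam *\<^sub>C T x" using Tsc by metis
    hence "S x = \<gamma> p" using x by (simp add: S_def)
    hence "x = G (\<gamma> p)" by (metis G1)
    thus "x \<in> range (inv (\<lambda>x. x - lam *\<^sub>C T x) \<circ> \<gamma>)"
      by (simp add: S_def[symmetric] invS)
  next
    fix x assume "x \<in> range (inv (\<lambda>x. x - lam *\<^sub>C T x) \<circ> \<gamma>)"
    then obtain p where "x = G (\<gamma> p)" by (auto simp: S_def[symmetric] invS)
    hence "S x = \<gamma> p" using G2 by simp
    hence x: "x = T (lam *\<^sub>C x) + \<gamma> p" unfolding S_def by (simp add: Tsc algebra_simps)
    have "opA T \<gamma> x = lam *\<^sub>C x" using opA_eq x by metis
    thus "x \<in> opA_eigenspace T \<gamma> lam"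
      unfolding opA_eigenspace_def opA_dom_def using x by auto
  qed
qed

end
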